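(* For $n\ge2$, the map $T_n$ restricts to a surjective map $T_n:X_n\setminus U_{12}\to\mathbb{C}^{3n-3}\setminus Z_{12}$.
   Context: $X_n=SL(2,\mathbb{C})^{\times n}$. The Magnus trace map $T_n:X_n\to\mathbb{C}^{3n-3}$ is $T_n(A_1,\dots,A_n)=(t_1,t_2,t_{12},t_3,t_{13},t_{23},\dots,t_n,t_{1n},t_{2n})$, with $t_j=\mathsf{tr}(A_j)$, $t_{jk}=\mathsf{tr}(A_jA_k)$ (for $n=2$ this is $(t_1,t_2,t_{12})$). Writing points of $\mathbb{C}^{3n-3}$ as $\mathbf{z}=(z_1,z_2,z_{12},\dots,z_n,z_{1n},z_{2n})$, set $\sigma_{12}(\mathbf{z})=z_1^2+z_2^2+z_{12}^2-z_1z_2z_{12}-4$, $Z_{12}=\{\mathbf{z}:\sigma_{12}(\mathbf{z})=0\}$ and $U_{12}=\{A\in X_n: t_1^2+t_2^2+t_{12}^2-t_1t_2t_{12}-4=0\}$ (equivalently $\mathsf{tr}(A_1A_2A_1^{-1}A_2^{-1})=2$). *)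

theory Defs
  imports "HOL-Analysis.Analysis"
begin

text \<open>Points of X_n = SL(2,C)^n are lists As of length n of 2x2 complex matrices
  of determinant 1; the matrix A_j of the paper is As ! (j - 1).\<close>

type_synonym mat2 = "complex^2^2"

definition X :: "nat \<Rightarrow> mat2 list set" where
  "X n = {As. length As = n \<and> (\<forall>A\<in>set As. det A = 1)}"

definition magnus_trace :: "nat \<Rightarrow> mat2 list \<Rightarrow> complex list" where
  "magnus_trace n As =
     [trace (As!0), trace (As!1), trace (As!0 ** As!1)] @
     concat (map (\<lambda>j. [trace (As!j), trace (As!0 ** As!j), trace (As!1 ** As!j)]) [2..<n])"

definition sigma12 :: "complex list \<Rightarrow> complex" where
  "sigma12 z = (z!0)^2 + (z!1)^2 + (z!2)^2 - z!0 * z!1 * z!2 - 4"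

definition Z12 :: "nat \<Rightarrow> complex list set" where
  "Z12 n = {z. length z = 3*n - 3 \<and> sigma12 z = 0}"

definition U12 :: "nat \<Rightarrow> mat2 list set" where
  "U12 n = {As \<in> X n. let t1 = trace (As!0); t2 = trace (As!1); t12 = trace (As!0 ** As!1)
                       in t1^2 + t2^2 + t12^2 - t1*t2*t12 - 4 = 0}"

end

theory Submission
  imports Defs
begin

definition mk :: "complex \<Rightarrow> complex \<Rightarrow> complex \<Rightarrow> complex \<Rightarrow> mat2" where
  "mk a b c d = vector [vector [a,b], vector [c,d]]"

lemma mk_nth: "mk a b c d $ 1 $ 1 = a" "mk a b c d $ 1 $ 2 = b" "mk a b c d $ 2 $ 1 = c" "mk a b c d $ 2 $ 2 = d"
  by (simp_all add: mk_def)

lemma det_mk: "det (mk a b c d) = a*d - b*c"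
  by (simp add: det_2 mk_nth)

lemma trace_mk: "trace (mk a b c d) = a + d"
  by (simp add: trace_def sum_2 mk_nth)

lemma mult_mk: "mk a b c d ** mk e f g h = mk (a*e+b*g) (a*f+b*h) (c*e+d*g) (c*f+d*h)"
  unfolding matrix_matrix_mult_def
  by (simp add: vec_eq_iff forall_2 sum_2 mk_nth)

lemma solve3:
  fixes a b c t u v :: complex
  assumes "a^2 + b^2 + c^2 - a*b*c - 4 \<noteq> 0"
  shows "\<exists>\<alpha> \<beta> \<gamma>. 2*\<alpha> + a*\<beta> + b*\<gamma> = t \<and> a*\<alpha> + (a^2-2)*\<beta> + c*\<gamma> = u \<and> b*\<alpha> + c*\<beta> + (b^2-2)*\<gamma> = v"
proof -
  define D where "D = -2*(a^2 + b^2 + c^2 - a*b*c - 4)"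
  have D: "D \<noteq> 0" unfolding D_def using assms by (metis mult_eq_0_iff neg_equal_0_iff_equal zero_neq_numeral)
  define C11 where "C11 = (a^2-2)*(b^2-2) - c^2"
  define C12 where "C12 = b*c - a*(b^2-2)"
  define C13 where "C13 = a*c - (a^2-2)*b"
  define C22 where "C22 = 2*(b^2-2) - b^2"
  define C23 where "C23 = a*b - 2*c"
  define C33 where "C33 = 2*(a^2-2) - a^2"
  define x1 where "x1 = (C11*t + C12*u + C13 * v)/D"
  define x2 where "x2 = (C12*t + C22*u + C23 * v)/D"
  define x3 where "x3 = (C13*t + C23*u + C33 * v)/D"
  have e1: "D*x1 = C11*t + C12*u + C13 * v" "D*x2 = C12*t + C22*u + C23 * v" "D*x3 = C13*t + C23*u + C33 * v"
    using D unfolding x1_def x2_def x3_def by simp_all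
  have p1: "2*(C11*t + C12*u + C13 * v) + a*(C12*t + C22*u + C23 * v) + b*(C13*t + C23*u + C33 * v) = D*t"
    unfolding C11_def C12_def C13_def C22_def C23_def C33_def D_def by (simp add: algebra_simps power2_eq_square)
  have p2: "a*(C11*t + C12*u + C13 * v) + (a^2-2)*(C12*t + C22*u + C23 * v) + c*(C13*t + C23*u + C33 * v) = D*u"
    unfolding C11_def C12_def C13_def C22_def C23_def C33_def D_def by (simp add: algebra_simps power2_eq_square)
  have p3: "b*(C11*t + C12*u + C13 * v) + c*(C12*t + C22*u + C23 * v) + (b^2-2)*(C13*t + C23*u + C33 * v) = D * v"
    unfolding C11_def C12_def C13_def C22_def C23_def C33_def D_def by (simp add: algebra_simps power2_eq_square)
  have q1: "D*(2*x1 + a*x2 + b*x3) = D*t" using p1 unfolding e1[symmetric] by (simp add: algebra_simps)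
  have q2: "D*(a*x1 + (a^2-2)*x2 + c*x3) = D*u" using p2 unfolding e1[symmetric] by (simp add: algebra_simps)
  have q3: "D*(b*x1 + c*x2 + (b^2-2)*x3) = D * v" using p3 unfolding e1[symmetric] by (simp add: algebra_simps)
  have "2*x1 + a*x2 + b*x3 = t \<and> a*x1 + (a^2-2)*x2 + c*x3 = u \<and> b*x1 + c*x2 + (b^2-2)*x3 = v"
    using q1 q2 q3 D by simp
  then show ?thesis by blast
qed

lemma quadpair: "\<exists>q r :: complex. q*r = -1 \<and> r - q = c"
proof -
  define r where "r = (c + csqrt (c^2 - 4))/2"
  have h: "csqrt (c^2-4) * csqrt (c^2-4) = c^2-4" by (metis power2_csqrt power2_eq_square)
  have "4*(r^2 - c*r + 1) = (2*r - c)^2 - (c^2 - 4)" by (simp add: algebra_simps power2_eq_square)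
  also have "2*r - c = csqrt (c^2-4)" unfolding r_def by (simp add: field_simps)
  finally have "4*(r^2 - c*r + 1) = 0" by simp
  then have "r^2 - c*r + 1 = 0" by (metis mult_eq_0_iff zero_neq_numeral)
  then have "(r-c)*r = -1 \<and> r - (r-c) = c" by (simp add: algebra_simps power2_eq_square)
  then show ?thesis by blast
qed

lemma extend:
  fixes a b c q r t u v :: complex
  assumes qr: "q*r = -1" and rq: "r - q = c" and sg: "a^2 + b^2 + c^2 - a*b*c - 4 \<noteq> 0"
  shows "\<exists>X. det X = 1 \<and> trace X = t \<and> trace (mk a 1 (-1) 0 ** X) = u \<and> trace (mk 0 q r b ** X) = v"
proof -
  define \<sigma> where "\<sigma> = a^2 + b^2 + c^2 - a*b*c - 4"
  have sg': "\<sigma> \<noteq> 0" using sg by (simp add: \<sigma>_def)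
  obtain \<alpha> \<beta> \<gamma> where g: "2*\<alpha> + a*\<beta> + b*\<gamma> = t" "a*\<alpha> + (a^2-2)*\<beta> + c*\<gamma> = u" "b*\<alpha> + c*\<beta> + (b^2-2)*\<gamma> = v"
    using solve3[OF sg] by blast
  define x0 where "x0 = \<alpha> + a*\<beta>"
  define y0 where "y0 = \<beta> + q*\<gamma>"
  define z0 where "z0 = -\<beta> + r*\<gamma>"
  define w0 where "w0 = \<alpha> + b*\<gamma>"
  define d0 where "d0 = x0*w0 - y0*z0"
  define s where "s = csqrt ((d0 - 1)/\<sigma>)"
  have s2: "s^2 * \<sigma> = d0 - 1" using sg' unfolding s_def by simp
  define X where "X = mk (x0 + s*(r+q)) (y0 + s*(a*q+b)) (z0 + s*(b-r*a)) (w0 - s*(q+r))"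
  have dK: "- ((r+q)^2) - (a*q+b)*(b-r*a) = -\<sigma>"
    unfolding \<sigma>_def rq[symmetric] using qr by algebra
  have "det X = d0 + s^2*(- ((r+q)^2) - (a*q+b)*(b-r*a))"
    unfolding X_def det_mk d0_def x0_def y0_def z0_def w0_def by (simp add: algebra_simps power2_eq_square)
  also have "\<dots> = d0 - s^2*\<sigma>" using dK by simp
  also have "\<dots> = 1" using s2 by simp
  finally have d: "det X = 1" .
  have t1: "trace X = t" unfolding X_def trace_mk g(1)[symmetric] x0_def w0_def by (simp add: algebra_simps)
  have t2: "trace (mk a 1 (-1) 0 ** X) = u" unfolding X_def mult_mk trace_mk g(2)[symmetric] x0_def y0_def z0_def w0_def rq[symmetric]
    using qr by (simp add: algebra_simps power2_eq_square)
  have t3: "trace (mk 0 q r b ** X) = v" unfolding X_def mult_mk trace_mk g(3)[symmetric] x0_def y0_def z0_def w0_def rq[symmetric]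
    using qr by (simp add: algebra_simps power2_eq_square)
  show ?thesis using d t1 t2 t3 by blast
qed


lemma concat_blocks_length:
  assumes "\<forall>i<m. length (f i) = 3"
  shows "length (concat (map f [0..<m])) = 3*m"
  using assms by (induction m) auto

lemma concat_blocks_nth:
  assumes "\<forall>i<m. length (f i) = 3" "i < m" "k < 3"
  shows "concat (map f [0..<m]) ! (3*i+k) = f i ! k"
  using assms
proof (induction m)
  case 0 then show ?case by simp
next
  case (Suc m)
  have L: "length (concat (map f [0..<m])) = 3*m" using Suc.prems(1) concat_blocks_length[of m f] by simp
  show ?case
  proof (cases "i < m")
    case True
    then show ?thesis using Suc L by (simp add: nth_append)
  next
    case False
    then have "i = m" using Suc.prems(2) by simp
    then show ?thesis using L by (simp add: nth_append)
  qed
qed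

lemma upt_shift2: "2 \<le> n \<Longrightarrow> map h [2..<n] = map (\<lambda>i. h (i+2)) [0..<n-2]"
proof -
  assume "2 \<le> n"
  then have e: "[2..<n] = [2..<(n-2)+2]" by (simp only: le_add_diff_inverse2)
  have "[2..<n] = map (\<lambda>i. i+2) [0..<n-2]" unfolding e by (rule map_add_upt[symmetric])
  then show ?thesis by simp
qed

theorem theorem5p4:
  fixes n :: nat
  assumes "n \<ge> 2"
  shows "magnus_trace n ` (X n - U12 n) = {z. length z = 3*n - 3} - Z12 n"
proof
  have Lm: "length (magnus_trace n As) = 3*n - 3" for As
  proof -
    define h where "h i = [trace (As!(i+2)), trace (As!0 ** As!(i+2)), trace (As!1 ** As!(i+2))]" for i
    have "concat (map (\<lambda>j. [trace (As!j), trace (As!0 ** As!j), trace (As!1 ** As!j)]) [2..<n])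
        = concat (map h [0..<n-2])"
      unfolding h_def by (subst upt_shift2[OF assms]) simp
    moreover have "length (concat (map h [0..<n-2])) = 3*(n-2)"
      by (rule concat_blocks_length) (simp add: h_def)
    ultimately show ?thesis unfolding magnus_trace_def using assms by simp
  qed
  show "magnus_trace n ` (X n - U12 n) \<subseteq> {z. length z = 3*n - 3} - Z12 n"
  proof
    fix z assume "z \<in> magnus_trace n ` (X n - U12 n)"
    then obtain As where As: "As \<in> X n" "As \<notin> U12 n" and z: "z = magnus_trace n As" by blast
    have "sigma12 z \<noteq> 0" using As unfolding z sigma12_def U12_def magnus_trace_def Let_def by simp
    then show "z \<in> {z. length z = 3*n - 3} - Z12 n" using Lm z unfolding Z12_def by simp
  qed
  show "{z. length z = 3*n - 3} - Z12 n \<subseteq> magnus_trace n ` (X n - U12 n)"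
  proof
    fix z assume "z \<in> {z. length z = 3*n - 3} - Z12 n"
    then have lz: "length z = 3*n - 3" and sz: "sigma12 z \<noteq> 0" unfolding Z12_def by auto
    define a where "a = z!0"
    define b where "b = z!1"
    define c where "c = z!2"
    have sg: "a^2 + b^2 + c^2 - a*b*c - 4 \<noteq> 0" using sz unfolding sigma12_def a_def b_def c_def by simp
    obtain q r where qr: "q*r = -1" "r - q = c" using quadpair by blast
    define A1 where "A1 = mk a 1 (-1) 0"
    define A2 where "A2 = mk 0 q r b"
    define F where "F j = (SOME Y. det Y = 1 \<and> trace Y = z!(3*j-3) \<and> trace (A1 ** Y) = z!(3*j-2) \<and> trace (A2 ** Y) = z!(3*j-1))" for j
    have F: "det (F j) = 1 \<and> trace (F j) = z!(3*j-3) \<and> trace (A1 ** F j) = z!(3*j-2) \<and> trace (A2 ** F j) = z!(3*j-1)" for j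
      unfolding F_def A1_def A2_def by (rule someI_ex, rule extend[OF qr sg])
    define As where "As = [A1, A2] @ map F [2..<n]"
    have lA: "length As = n" using assms unfolding As_def by simp
    have dA1: "det A1 = 1" unfolding A1_def det_mk by simp
    have dA2: "det A2 = 1" unfolding A2_def det_mk using qr by simp
    have AX: "As \<in> X n" unfolding X_def using lA dA1 dA2 F unfolding As_def by auto
    have A0: "As!0 = A1" and A1': "As!1 = A2" unfolding As_def by simp_all
    have Aj: "As!j = F j" if "2 \<le> j" "j < n" for j
    proof -
      have e: "Suc (Suc (j - Suc (Suc 0))) = j" using that by simp
      show ?thesis using that unfolding As_def by (simp add: nth_append e)
    qed
    have tA1: "trace A1 = a" unfolding A1_def trace_mk by simp
    have tA2: "trace A2 = b" unfolding A2_def trace_mk by simp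
    have tA12: "trace (A1 ** A2) = c" unfolding A1_def A2_def mult_mk trace_mk using qr by simp
    define g where "g i = [trace (As!(i+2)), trace (As!0 ** As!(i+2)), trace (As!1 ** As!(i+2))]" for i
    have M: "magnus_trace n As = [a, b, c] @ concat (map g [0..<n-2])"
    proof -
      have "concat (map (\<lambda>j. [trace (As!j), trace (As!0 ** As!j), trace (As!1 ** As!j)]) [2..<n])
          = concat (map g [0..<n-2])"
        unfolding g_def by (subst upt_shift2[OF assms]) simp
      then show ?thesis unfolding magnus_trace_def A0 A1' tA1 tA2 tA12 by simp
    qed
    have gl: "\<forall>i<n-2. length (g i) = 3" unfolding g_def by simp
    have "magnus_trace n As = z"
    proof (rule nth_equalityI)
      show "length (magnus_trace n As) = length z" using Lm lz by simp
      fix p assume "p < length (magnus_trace n As)"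
      then have p: "p < 3*n - 3" using Lm by simp
      show "magnus_trace n As ! p = z ! p"
      proof (cases "p < 3")
        case True
        then have "p = 0 \<or> p = 1 \<or> p = 2" by auto
        then show ?thesis unfolding M a_def b_def c_def by auto
      next
        case False
        define i where "i = (p - 3) div 3"
        define k where "k = (p - 3) mod 3"
        have pik: "p = 3 + (3*i + k)" unfolding i_def k_def using False by simp
        have k3: "k < 3" unfolding k_def by simp
        have i2: "i < n - 2" using p pik by simp
        have "magnus_trace n As ! p = g i ! k"
          unfolding M pik using concat_blocks_nth[OF gl i2 k3] by (simp add: nth_append)
        also have "\<dots> = z ! p"
        proof -
          have Fi: "As!(i+2) = F (i+2)" using Aj[of "i+2"] i2 by simp
          have e: "3*(i+2) - 3 = 3*i+3" "3*(i+2) - 2 = 3*i+4" "3*(i+2) - 1 = 3*i+5" by simp_all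
          have "k = 0 \<or> k = 1 \<or> k = 2" using k3 by auto
          then show ?thesis unfolding g_def Fi A0 A1' using F[of "i+2"] pik unfolding e by (auto simp: add.commute)
        qed
        finally show ?thesis .
      qed
    qed
    moreover have "As \<notin> U12 n" unfolding U12_def Let_def A0 A1' tA1 tA2 tA12 using sg A0 A1' tA1 tA2 tA12 by simp
    ultimately show "z \<in> magnus_trace n ` (X n - U12 n)" using AX by blast
  qed
qed

end
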